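(* Let $\mathcal U$ be a finite set, $P$ a probability distribution on $\mathcal U$ with $P(u)>0$ for all $u$, and $d\ge2$ an integer. Let $l:\mathcal U\to\mathbb{N}$ be the codeword lengths of a uniquely decodable $d$-ary code satisfying $$l(u)\ \ge\ \left\lceil \log_d\frac{1}{P(u)}\right\rceil\quad\text{for all }u\in\mathcal U.$$ With $c_{d,l}=\sum_u d^{-l(u)}$, $Q_{d,l}(u)=d^{-l(u)}/c_{d,l}$, and average redundancy $\Delta_d=\sum_u P(u)l(u)+\sum_u P(u)\log_d P(u)$, we have $$J(P,Q_{d,l})\le\frac{\Delta_d\log d}{2}\qquad\text{and}\qquad \sum_{u\in\mathcal U}\big|P(u)-Q_{d,l}(u)\big|\ \le\ 2\,\varepsilon\!\left(\frac{\Delta_d\log d}{2}\right),$$ where for $x\ge0$, $\varepsilon(x)$ denotes the unique $\varepsilon\in[0,1)$ solving $\varepsilon\log\frac{1+\varepsilon}{1-\varepsilon}=x$.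
   Context: Jeffreys' divergence is $J(P,Q)=\frac{D(P\|Q)+D(Q\|P)}{2}$ with $D(P\|Q)=\sum_x P(x)\log\frac{P(x)}{Q(x)}$; $\log$ denotes the natural logarithm and $\log_d$ the base-$d$ logarithm. *)

theory Defs
  imports "HOL-Analysis.Analysis"
begin

definition dary_code :: "nat \<Rightarrow> 'a set \<Rightarrow> ('a \<Rightarrow> nat list) \<Rightarrow> bool" where
  "dary_code d U c \<longleftrightarrow> (\<forall>u\<in>U. set (c u) \<subseteq> {..<d})"

definition uniquely_decodable :: "'a set \<Rightarrow> ('a \<Rightarrow> nat list) \<Rightarrow> bool" where
  "uniquely_decodable U c \<longleftrightarrow>
     (\<forall>xs\<in>lists U. \<forall>ys\<in>lists U. concat (map c xs) = concat (map c ys) \<longrightarrow> xs = ys)"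

definition KL_div :: "'a set \<Rightarrow> ('a \<Rightarrow> real) \<Rightarrow> ('a \<Rightarrow> real) \<Rightarrow> real" where
  "KL_div U P Q = (\<Sum>x\<in>U. P x * ln (P x / Q x))"

definition jeffreys :: "'a set \<Rightarrow> ('a \<Rightarrow> real) \<Rightarrow> ('a \<Rightarrow> real) \<Rightarrow> real" where
  "jeffreys U P Q = (KL_div U P Q + KL_div U Q P) / 2"

definition kraft_sum :: "'a set \<Rightarrow> nat \<Rightarrow> ('a \<Rightarrow> nat) \<Rightarrow> real" where
  "kraft_sum U d l = (\<Sum>u\<in>U. real d powr (- real (l u)))"

definition Q_code :: "'a set \<Rightarrow> nat \<Rightarrow> ('a \<Rightarrow> nat) \<Rightarrow> 'a \<Rightarrow> real" where
  "Q_code U d l u = real d powr (- real (l u)) / kraft_sum U d l"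

definition redundancy :: "'a set \<Rightarrow> nat \<Rightarrow> ('a \<Rightarrow> real) \<Rightarrow> ('a \<Rightarrow> nat) \<Rightarrow> real" where
  "redundancy U d P l = (\<Sum>u\<in>U. P u * real (l u)) + (\<Sum>u\<in>U. P u * log (real d) (P u))"

definition eps_fun :: "real \<Rightarrow> real" where
  "eps_fun x = (THE e. 0 \<le> e \<and> e < 1 \<and> e * ln ((1 + e) / (1 - e)) = x)"

end

theory Submission
  imports Defs
begin

lemma log_sum_ineq:
  fixes a b :: "'a \<Rightarrow> real"
  assumes "finite S" "S \<noteq> {}" "\<forall>x\<in>S. a x > 0" "\<forall>x\<in>S. b x > 0"
  shows "(\<Sum>x\<in>S. a x) * ln ((\<Sum>x\<in>S. a x) / (\<Sum>x\<in>S. b x)) \<le> (\<Sum>x\<in>S. a x * ln (a x / b x))"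
proof -
  define A where "A = (\<Sum>x\<in>S. a x)"
  define B where "B = (\<Sum>x\<in>S. b x)"
  have A: "A > 0" unfolding A_def using assms by (intro sum_pos) auto
  have B: "B > 0" unfolding B_def using assms by (intro sum_pos) auto
  have "(\<Sum>x\<in>S. a x * ln (a x / b x)) - A * ln (A / B) = (\<Sum>x\<in>S. a x * (ln (a x / b x) - ln (A/B)))"
    by (simp add: A_def sum_subtractf sum_distrib_right right_diff_distrib)
  also have "\<dots> = (\<Sum>x\<in>S. a x * ln ((a x * B) / (b x * A)))"
  proof (rule sum.cong[OF refl])
    fix x assume "x \<in> S"
    then have "a x > 0" "b x > 0" using assms by auto
    then show "a x * (ln (a x / b x) - ln (A/B)) = a x * ln ((a x * B) / (b x * A))"
      using A B by (simp add: ln_div ln_mult)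
  qed
  also have "\<dots> \<ge> (\<Sum>x\<in>S. a x * (1 - (b x * A) / (a x * B)))"
  proof (rule sum_mono)
    fix x assume "x \<in> S"
    then have ax: "a x > 0" and bx: "b x > 0" using assms by auto
    define y where "y = (a x * B) / (b x * A)"
    have y: "y > 0" using ax bx A B by (simp add: y_def)
    have "ln (1/y) \<le> 1/y - 1" using y by (intro ln_le_minus_one) auto
    then have "1 - 1/y \<le> ln y" using y by (simp add: ln_div)
    moreover have "1/y = (b x * A) / (a x * B)" by (simp add: y_def)
    ultimately show "a x * (1 - (b x * A) / (a x * B)) \<le> a x * ln ((a x * B) / (b x * A))"
      using ax by (intro mult_left_mono) (auto simp: y_def)
  qed
  also have "(\<Sum>x\<in>S. a x * (1 - (b x * A) / (a x * B))) = A - (\<Sum>x\<in>S. b x * A / B)"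
  proof -
    have "(\<Sum>x\<in>S. a x * (1 - (b x * A) / (a x * B))) = (\<Sum>x\<in>S. a x - b x * A / B)"
      using assms A B by (intro sum.cong) (auto simp: field_simps)
    then show ?thesis by (simp add: sum_subtractf A_def)
  qed
  also have "(\<Sum>x\<in>S. b x * A / B) = A"
    using B by (simp add: sum_divide_distrib[symmetric] sum_distrib_right[symmetric] B_def[symmetric])
  finally show ?thesis by (simp add: A_def B_def)
qed

definition ff :: "real \<Rightarrow> real" where "ff e = e * ln ((1 + e) / (1 - e))"

lemma ff_strict:
  assumes "0 \<le> a" "a < b" "b < 1"
  shows "ff a < ff b"
proof -
  have r: "(1+a)/(1-a) < (1+b)/(1-b)" using assms by (simp add: field_simps)
  have r0: "1 \<le> (1+a)/(1-a)" using assms by (simp add: field_simps)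
  have La: "0 \<le> ln ((1+a)/(1-a))" using r0 by simp
  have "ln ((1+a)/(1-a)) < ln ((1+b)/(1-b))" using r r0 by (subst ln_less_cancel_iff) auto
  then have "b * ln ((1+a)/(1-a)) < b * ln ((1+b)/(1-b))" using assms by simp
  moreover have "a * ln ((1+a)/(1-a)) \<le> b * ln ((1+a)/(1-a))" using La assms by (intro mult_right_mono) auto
  ultimately show ?thesis by (simp add: ff_def)
qed

lemma ff_exists:
  assumes "x \<ge> 0"
  shows "\<exists>e. 0 \<le> e \<and> e < 1 \<and> ff e = x"
proof -
  define e0 where "e0 = max (1/2) (1 - exp (-2*x))"
  have e0: "1/2 \<le> e0" "e0 < 1" by (auto simp: e0_def)
  have "exp (2*x) \<le> 1 / (1 - e0)"
  proof -
    have "1 - e0 \<le> exp (-2*x)" by (auto simp: e0_def)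
    then have "1/(1-e0) \<ge> 1/exp(-2*x)" using e0 by (intro divide_left_mono) auto
    then show ?thesis by (simp add: exp_minus field_simps)
  qed
  also have "1/(1-e0) \<le> (1+e0)/(1-e0)" using e0 by (intro divide_right_mono) auto
  finally have "2*x \<le> ln ((1+e0)/(1-e0))" using e0 by (subst ln_ge_iff) auto
  then have "e0 * (2*x) \<le> ff e0" unfolding ff_def using e0 by (intro mult_left_mono) auto
  moreover have "x \<le> e0 * (2*x)" proof -
    have "x * 1 \<le> x * (2*e0)" using e0 assms by (intro mult_left_mono) auto
    then show ?thesis by (simp add: algebra_simps)
  qed
  ultimately have h: "x \<le> ff e0" by linarith
  have "continuous_on {0..e0} ff" unfolding ff_def using e0
    by (intro continuous_intros) (auto simp: field_simps)
  from IVT'[of ff 0 x e0, OF _ h _ this] assms e0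
  obtain e where "0 \<le> e" "e \<le> e0" "ff e = x" by (auto simp: ff_def)
  then show ?thesis using e0 by (intro exI[of _ e]) auto
qed

lemma eps_fun_ff:
  assumes "x \<ge> 0"
  shows "0 \<le> eps_fun x \<and> eps_fun x < 1 \<and> ff (eps_fun x) = x"
proof -
  have "\<exists>!e. 0 \<le> e \<and> e < 1 \<and> ff e = x"
  proof (rule ex_ex1I)
    show "\<exists>e. 0 \<le> e \<and> e < 1 \<and> ff e = x" by (rule ff_exists[OF assms])
  next
    fix e1 e2 assume "0 \<le> e1 \<and> e1 < 1 \<and> ff e1 = x" "0 \<le> e2 \<and> e2 < 1 \<and> ff e2 = x"
    then show "e1 = e2" using ff_strict by (metis linorder_neqE_linordered_idom order_less_irrefl)
  qed
  then show ?thesis unfolding eps_fun_def ff_def[symmetric] by (rule theI')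
qed

lemma binary_bound:
  fixes p q :: real
  assumes "0 < q" "q < p" "p < 1"
  shows "2 * ((p - q) * ln ((1 + (p-q)) / (1 - (p-q)))) \<le> (p - q) * (ln p - ln q - ln (1-p) + ln (1-q))"
proof -
  define t where "t = p - q"
  have t: "0 < t" "t < 1" using assms by (auto simp: t_def)
  have id: "p*(1-q)*(1-t)^2 - (1+t)^2*q*(1-p) = t*(1-t-2*q)^2"
    unfolding t_def by (simp add: power2_eq_square algebra_simps)
  have le: "(1+t)^2*q*(1-p) \<le> p*(1-q)*(1-t)^2" using id t
    by (smt (verit) mult_nonneg_nonneg zero_le_power2)
  have pos: "0 < (1+t)^2*q*(1-p)" using t assms by auto
  have "ln ((1+t)^2*q*(1-p)) \<le> ln (p*(1-q)*(1-t)^2)" using le pos by simp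
  then have "2*ln(1+t) + ln q + ln (1-p) \<le> ln p + ln (1-q) + 2 * ln (1-t)"
    using t assms by (simp add: ln_mult ln_realpow)
  then have "2 * ln ((1+t)/(1-t)) \<le> ln p - ln q - ln (1-p) + ln (1-q)"
    using t by (simp add: ln_div)
  then have "t * (2 * ln ((1+t)/(1-t))) \<le> t * (ln p - ln q - ln (1-p) + ln (1-q))"
    using t by (intro mult_left_mono) auto
  then show ?thesis by (simp add: t_def)
qed

lemma pinsker_type:
  fixes P Q :: "'a \<Rightarrow> real"
  assumes fin: "finite U" and P0: "\<forall>u\<in>U. P u > 0" and Q0: "\<forall>u\<in>U. Q u > 0"
    and P1: "(\<Sum>u\<in>U. P u) = 1" and Q1: "(\<Sum>u\<in>U. Q u) = 1"
  defines "t \<equiv> (\<Sum>u\<in>U. \<bar>P u - Q u\<bar>) / 2"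
  shows "0 \<le> t \<and> t < 1 \<and> 2 * ff t \<le> (\<Sum>u\<in>U. P u * ln (P u / Q u)) + (\<Sum>u\<in>U. Q u * ln (Q u / P u))"
proof -
  define A where "A = {u\<in>U. Q u \<le> P u}"
  define B where "B = {u\<in>U. P u < Q u}"
  have AB: "U = A \<union> B" "A \<inter> B = {}" "finite A" "finite B" using fin by (auto simp: A_def B_def)
  have split: "\<And>f. (\<Sum>u\<in>U. f u) = (\<Sum>u\<in>A. f u) + (\<Sum>u\<in>B. f u)"
    using AB by (metis sum.union_disjoint)
  define p where "p = (\<Sum>u\<in>A. P u)"
  define q where "q = (\<Sum>u\<in>A. Q u)"
  have pB: "(\<Sum>u\<in>B. P u) = 1 - p" using split[of P] P1 by (simp add: p_def)
  have qB: "(\<Sum>u\<in>B. Q u) = 1 - q" using split[of Q] Q1 by (simp add: q_def)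
  have "(\<Sum>u\<in>U. \<bar>P u - Q u\<bar>) = (\<Sum>u\<in>A. P u - Q u) + (\<Sum>u\<in>B. Q u - P u)"
    using split[of "\<lambda>u. \<bar>P u - Q u\<bar>"] by (simp add: A_def B_def)
  then have tpq: "t = p - q" using pB qB by (simp add: t_def sum_subtractf p_def q_def)
  have t0: "0 \<le> t" unfolding t_def by (simp add: sum_nonneg)
  have termpos: "\<And>u. u \<in> U \<Longrightarrow> 0 \<le> P u * ln (P u / Q u) + Q u * ln (Q u / P u)"
  proof -
    fix u assume u: "u \<in> U"
    have pu: "P u > 0" and qu: "Q u > 0" using u P0 Q0 by auto
    have "P u * ln (P u / Q u) + Q u * ln (Q u / P u) = (P u - Q u) * (ln (P u) - ln (Q u))"
      using pu qu by (simp add: ln_div algebra_simps)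
    also have "\<dots> \<ge> 0"
    proof (cases "Q u \<le> P u")
      case True then show ?thesis using pu qu by (intro mult_nonneg_nonneg) auto
    next
      case False then show ?thesis using pu qu by (intro mult_nonpos_nonpos) auto
    qed
    finally show "0 \<le> P u * ln (P u / Q u) + Q u * ln (Q u / P u)" .
  qed
  have RHS0: "0 \<le> (\<Sum>u\<in>U. P u * ln (P u / Q u)) + (\<Sum>u\<in>U. Q u * ln (Q u / P u))"
    using termpos by (simp add: sum.distrib[symmetric] sum_nonneg)
  have Une: "U \<noteq> {}" using P1 by auto
  have Ane: "A \<noteq> {}"
  proof
    assume "A = {}"
    then have "B = U" using AB by auto
    then have "(\<Sum>u\<in>U. P u) < (\<Sum>u\<in>U. Q u)" using fin Une by (intro sum_strict_mono) (auto simp: B_def)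
    then show False using P1 Q1 by simp
  qed
  have q0: "0 < q" unfolding q_def using AB Ane Q0 by (intro sum_pos) auto
  have p0: "0 < p" unfolding p_def using AB Ane P0 by (intro sum_pos) auto
  show ?thesis
  proof (cases "B = {}")
    case True
    then have "t = 0" using tpq pB qB by simp
    then show ?thesis using RHS0 by (simp add: ff_def)
  next
    case False
    have pB0: "0 < 1 - p" unfolding pB[symmetric] using AB False P0 by (intro sum_pos) auto
    have qB0: "0 < 1 - q" unfolding qB[symmetric] using AB False Q0 by (intro sum_pos) auto
    have t1: "t < 1" using tpq q0 pB0 by simp
    show ?thesis
    proof (cases "t = 0")
      case True then show ?thesis using RHS0 by (simp add: ff_def)
    next
      case False
      then have qp: "q < p" using tpq t0 by simp
      have PA: "\<forall>u\<in>A. P u > 0" "\<forall>u\<in>A. Q u > 0" "\<forall>u\<in>B. P u > 0" "\<forall>u\<in>B. Q u > 0"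
        using P0 Q0 AB by auto
      have l1: "p * ln (p/q) \<le> (\<Sum>u\<in>A. P u * ln (P u / Q u))"
        using log_sum_ineq[OF AB(3) Ane PA(1) PA(2)] by (simp add: p_def q_def)
      have l2: "q * ln (q/p) \<le> (\<Sum>u\<in>A. Q u * ln (Q u / P u))"
        using log_sum_ineq[OF AB(3) Ane PA(2) PA(1)] by (simp add: p_def q_def)
      have l3: "(1-p) * ln ((1-p)/(1-q)) \<le> (\<Sum>u\<in>B. P u * ln (P u / Q u))"
        using log_sum_ineq[OF AB(4) \<open>B \<noteq> {}\<close> PA(3) PA(4)] pB qB by simp
      have l4: "(1-q) * ln ((1-q)/(1-p)) \<le> (\<Sum>u\<in>B. Q u * ln (Q u / P u))"
        using log_sum_ineq[OF AB(4) \<open>B \<noteq> {}\<close> PA(4) PA(3)] pB qB by simp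
      have eq: "p * ln (p/q) + q * ln (q/p) + (1-p) * ln ((1-p)/(1-q)) + (1-q) * ln ((1-q)/(1-p))
          = (p - q) * (ln p - ln q - ln (1-p) + ln (1-q))"
        using p0 q0 pB0 qB0 by (simp add: ln_div algebra_simps)
      have bb: "2 * ((p - q) * ln ((1 + (p-q)) / (1 - (p-q)))) \<le> (p - q) * (ln p - ln q - ln (1-p) + ln (1-q))"
        using binary_bound q0 qp pB0 by simp
      have "2 * ff t \<le> (\<Sum>u\<in>A. P u * ln (P u / Q u)) + (\<Sum>u\<in>B. P u * ln (P u / Q u))
           + ((\<Sum>u\<in>A. Q u * ln (Q u / P u)) + (\<Sum>u\<in>B. Q u * ln (Q u / P u)))"
        using l1 l2 l3 l4 eq bb tpq by (simp add: ff_def)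
      then show ?thesis using split[of "\<lambda>u. P u * ln (P u / Q u)"] split[of "\<lambda>u. Q u * ln (Q u / P u)"] t0 t1 by linarith
    qed
  qed
qed

theorem mainTheorem8:
  fixes U :: "'a set" and P :: "'a \<Rightarrow> real" and d :: nat
    and l :: "'a \<Rightarrow> nat" and c :: "'a \<Rightarrow> nat list"
  assumes "finite U"
    and "\<forall>u\<in>U. P u > 0"
    and "(\<Sum>u\<in>U. P u) = 1"
    and "d \<ge> 2"
    and "dary_code d U c"
    and "uniquely_decodable U c"
    and "\<forall>u\<in>U. length (c u) = l u"
    and "\<forall>u\<in>U. int (l u) \<ge> \<lceil>log (real d) (1 / P u)\<rceil>"
  shows "jeffreys U P (Q_code U d l) \<le> redundancy U d P l * ln (real d) / 2
     \<and> (\<Sum>u\<in>U. \<bar>P u - Q_code U d l u\<bar>)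
         \<le> 2 * eps_fun (redundancy U d P l * ln (real d) / 2)"
proof -
  note fin = assms(1) and P0 = assms(2) and P1 = assms(3)
  have d1: "real d > 1" using assms(4) by simp
  define a where "a u = real d powr (- real (l u))" for u
  define cc where "cc = kraft_sum U d l"
  have cc_def': "cc = (\<Sum>u\<in>U. a u)" by (simp add: cc_def kraft_sum_def a_def)
  have Q_eq: "\<And>u. Q_code U d l u = a u / cc" by (simp add: Q_code_def a_def cc_def)
  have a0: "\<And>u. a u > 0" using d1 by (simp add: a_def)
  have aP: "\<And>u. u \<in> U \<Longrightarrow> a u \<le> P u"
  proof -
    fix u assume u: "u \<in> U"
    have pu: "P u > 0" using u P0 by auto
    have cl: "\<lceil>log (real d) (1 / P u)\<rceil> \<le> int (l u)" using assms(8) u by auto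
    have "log (real d) (1 / P u) \<le> real_of_int \<lceil>log (real d) (1 / P u)\<rceil>" by (rule le_of_int_ceiling)
    also have "\<dots> \<le> real_of_int (int (l u))" using cl by (simp only: of_int_le_iff)
    finally have "log (real d) (1 / P u) \<le> real (l u)" by simp
    then have "- real (l u) \<le> log (real d) (P u)" using pu d1
      by (simp add: log_divide)
    then have "a u \<le> real d powr log (real d) (P u)" unfolding a_def using d1
      by (intro powr_mono) auto
    then show "a u \<le> P u" using pu d1 by simp
  qed
  have Une: "U \<noteq> {}" using P1 by auto
  have cc0: "cc > 0" unfolding cc_def' using fin Une a0 by (intro sum_pos) auto
  have cc1: "cc \<le> 1" unfolding cc_def' P1[symmetric] using aP by (intro sum_mono) auto
  have Q0: "\<forall>u\<in>U. Q_code U d l u > 0" using a0 cc0 Q_eq by simp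
  have Q1: "(\<Sum>u\<in>U. Q_code U d l u) = 1" using cc0 by (simp add: Q_eq sum_divide_distrib[symmetric] cc_def'[symmetric])
  define x where "x = redundancy U d P l * ln (real d) / 2"
  have lnd: "ln (real d) > 0" using d1 by simp
  have red: "redundancy U d P l * ln (real d) = (\<Sum>u\<in>U. P u * ln (P u / a u))"
  proof -
    have "redundancy U d P l * ln (real d) = (\<Sum>u\<in>U. P u * real (l u) * ln (real d) + P u * ln (P u))"
      using lnd by (simp add: redundancy_def sum_distrib_right sum.distrib log_def distrib_right)
    also have "\<dots> = (\<Sum>u\<in>U. P u * ln (P u / a u))"
      using P0 a0 d1 by (intro sum.cong) (auto simp: ln_div a_def algebra_simps)
    finally show ?thesis .
  qed
  have KL1: "KL_div U P (Q_code U d l) = redundancy U d P l * ln (real d) + ln cc"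
  proof -
    have "KL_div U P (Q_code U d l) = (\<Sum>u\<in>U. P u * ln (P u / a u) + P u * ln cc)"
      unfolding KL_div_def
    proof (intro sum.cong refl)
      fix u assume u: "u \<in> U"
      have pu: "P u > 0" using u P0 by auto
      have "P u / Q_code U d l u = (P u / a u) * cc" by (simp add: Q_eq)
      then have "ln (P u / Q_code U d l u) = ln ((P u / a u) * cc)" by (simp only:)
      also have "\<dots> = ln (P u / a u) + ln cc"
        using pu a0[of u] cc0 by (intro ln_mult_pos) auto
      finally have "ln (P u / Q_code U d l u) = ln (P u / a u) + ln cc" .
      then show "P u * ln (P u / Q_code U d l u) = P u * ln (P u / a u) + P u * ln cc"
        by (simp add: distrib_left)
    qed
    then show ?thesis using P1 by (simp add: sum.distrib red sum_distrib_right[symmetric])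
  qed
  have KL2: "KL_div U (Q_code U d l) P \<le> - ln cc"
  proof -
    have "KL_div U (Q_code U d l) P = (\<Sum>u\<in>U. Q_code U d l u * ln (a u / P u) - Q_code U d l u * ln cc)"
      unfolding KL_div_def
    proof (intro sum.cong refl)
      fix u assume u: "u \<in> U"
      have pu: "P u > 0" using u P0 by auto
      have "Q_code U d l u / P u = (a u / P u) / cc" by (simp add: Q_eq)
      then have "ln (Q_code U d l u / P u) = ln ((a u / P u) / cc)" by (simp only:)
      also have "\<dots> = ln (a u / P u) - ln cc"
        using pu a0[of u] cc0 by (intro ln_divide_pos) auto
      finally have "ln (Q_code U d l u / P u) = ln (a u / P u) - ln cc" .
      then show "Q_code U d l u * ln (Q_code U d l u / P u) = Q_code U d l u * ln (a u / P u) - Q_code U d l u * ln cc"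
        by (simp add: right_diff_distrib)
    qed
    also have "\<dots> = (\<Sum>u\<in>U. Q_code U d l u * ln (a u / P u)) - ln cc"
      using Q1 by (simp add: sum_subtractf sum_distrib_right[symmetric])
    also have "(\<Sum>u\<in>U. Q_code U d l u * ln (a u / P u)) \<le> 0"
    proof (rule sum_nonpos)
      fix u assume u: "u \<in> U"
      have "a u / P u \<le> 1" using aP[OF u] P0 u by simp
      then have "ln (a u / P u) \<le> 0" using a0 P0 u by simp
      then show "Q_code U d l u * ln (a u / P u) \<le> 0" using Q0 u by (intro mult_nonneg_nonpos) auto
    qed
    finally show ?thesis by simp
  qed
  have J: "jeffreys U P (Q_code U d l) \<le> x"
    using KL1 KL2 by (simp add: jeffreys_def x_def)
  have pk: "0 \<le> (\<Sum>u\<in>U. \<bar>P u - Q_code U d l u\<bar>) / 2 \<and> (\<Sum>u\<in>U. \<bar>P u - Q_code U d l u\<bar>) / 2 < 1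
     \<and> 2 * ff ((\<Sum>u\<in>U. \<bar>P u - Q_code U d l u\<bar>) / 2) \<le> KL_div U P (Q_code U d l) + KL_div U (Q_code U d l) P"
    using pinsker_type[OF fin P0 Q0 P1 Q1] by (simp add: KL_div_def)
  define t where "t = (\<Sum>u\<in>U. \<bar>P u - Q_code U d l u\<bar>) / 2"
  have t: "0 \<le> t" "t < 1" "ff t \<le> x" using pk J by (auto simp: t_def jeffreys_def)
  have "ff 0 \<le> ff t" using t ff_strict[of 0 t] by (cases "t = 0") auto
  moreover have "ff 0 = 0" by (simp add: ff_def)
  ultimately have x0: "0 \<le> x" using t(3) by linarith
  have e: "0 \<le> eps_fun x" "eps_fun x < 1" "ff (eps_fun x) = x" using eps_fun_ff[OF x0] by auto
  have "t \<le> eps_fun x"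
  proof (rule ccontr)
    assume "\<not> t \<le> eps_fun x"
    then have "ff (eps_fun x) < ff t" using e t by (intro ff_strict) auto
    then show False using e t by simp
  qed
  then show ?thesis using J by (simp add: x_def t_def)
qed

end
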